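(* Let $\gamma\in\mathbb{R}$, $d>0$, and let $I:\mathbb{R}\to\mathbb{R}$ be a continuous $2\pi$-periodic function. Consider the system on the two-torus $(\mathbb{R}/2\pi\mathbb{Z})^2$ $$\dot\phi_1=\gamma-\sin\phi_1+d\,I(\phi_2),\qquad \dot\phi_2=\gamma-\sin\phi_2+d\,I(\phi_1).$$ Its equilibria are of two types: those on the diagonal $\phi_1=\phi_2$ (first type) and those off the diagonal (second type), the latter occurring in symmetric pairs $(a,b)$, $(b,a)$. If the system has an equilibrium of the second type, i.e. an equilibrium $(a,b)$ with $a\neq b$ (mod $2\pi$), then it also has an equilibrium of the first type, i.e. there exists $\xi$ with $\gamma-\sin\xi+d\,I(\xi)=0$. *)

theory Defs
  imports "HOL-Analysis.Analysis"
begin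

end

theory Submission
  imports Defs
begin

theorem mainTheorem2:
  fixes \<gamma> d :: real and I :: "real \<Rightarrow> real" and a b :: real
  assumes "d > 0"
    and "continuous_on UNIV I"
    and "\<And>x. I (x + 2 * pi) = I x"
    and "\<gamma> - sin a + d * I b = 0"
    and "\<gamma> - sin b + d * I a = 0"
    and "\<forall>k::int. a - b \<noteq> 2 * pi * of_int k"
  shows "\<exists>\<xi>. \<gamma> - sin \<xi> + d * I \<xi> = 0"
proof -
  define f where "f = (\<lambda>x. \<gamma> - sin x + d * I x)"
  have cf: "continuous_on S f" for S
    unfolding f_def
    by (intro continuous_intros continuous_on_subset[OF assms(2)]) auto
  have fa: "f a = sin b - sin a" using assms(5) unfolding f_def by simp
  have fb: "f b = - f a" using assms(4) fa unfolding f_def by simp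
  have "\<exists>x. f x = 0"
  proof (cases "a \<le> b")
    case True
    show ?thesis
    proof (cases "f a \<le> 0")
      case True
      then show ?thesis using IVT'[of f a 0 b] cf \<open>a \<le> b\<close> fb by force
    next
      case False
      then show ?thesis using IVT2'[of f b 0 a] cf \<open>a \<le> b\<close> fb by force
    qed
  next
    case False
    hence ba: "b \<le> a" by simp
    show ?thesis
    proof (cases "f b \<le> 0")
      case True
      then show ?thesis using IVT'[of f b 0 a] cf ba fb by force
    next
      case False
      then show ?thesis using IVT2'[of f a 0 b] cf ba fb by force
    qed
  qed
  then show ?thesis unfolding f_def by blast
qed

end
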